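(* Let $D$ be a dialgebra and $E$ a dendriform algebra over $K$. Then on $D\otimes E$ the bracket defined on generators by $$[x\otimes a,y\otimes b]:=(x\dashv y)\otimes(a\prec b)-(y\vdash x)\otimes(b\succ a)-(y\dashv x)\otimes(b\prec a)+(x\vdash y)\otimes(a\succ b)$$ ($x,y\in D$, $a,b\in E$), extended bilinearly, is a Lie bracket.
   Context: A dialgebra is a vector space $D$ with bilinear $\dashv,\vdash$ satisfying $(x\dashv y)\dashv z=x\dashv(y\vdash z)$, $(x\dashv y)\dashv z=x\dashv(y\dashv z)$, $(x\vdash y)\dashv z=x\vdash(y\dashv z)$, $(x\dashv y)\vdash z=x\vdash(y\vdash z)$, $(x\vdash y)\vdash z=x\vdash(y\vdash z)$. A dendriform algebra is a vector space $E$ with bilinear $\prec,\succ$ satisfying (i) $(a\prec b)\prec c=a\prec(b\prec c)+a\prec(b\succ c)$, (ii) $(a\succ b)\prec c=a\succ(b\prec c)$, (iii) $(a\prec b)\succ c+(a\succ b)\succ c=a\succ(b\succ c)$. *)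

theory Defs
  imports Main "HOL.Vector_Spaces" "HOL-Library.Function_Algebras"
begin

definition bilinear_op ::
  "('k::field \<Rightarrow> 'v::ab_group_add \<Rightarrow> 'v) \<Rightarrow> ('v \<Rightarrow> 'v \<Rightarrow> 'v) \<Rightarrow> bool" where
  "bilinear_op sc m \<longleftrightarrow>
     (\<forall>x y z. m (x + y) z = m x z + m y z) \<and>
     (\<forall>x y z. m x (y + z) = m x y + m x z) \<and>
     (\<forall>c x y. m (sc c x) y = sc c (m x y)) \<and>
     (\<forall>c x y. m x (sc c y) = sc c (m x y))"

definition dialgebra ::
  "('k::field \<Rightarrow> 'd::ab_group_add \<Rightarrow> 'd) \<Rightarrow> ('d \<Rightarrow> 'd \<Rightarrow> 'd) \<Rightarrow> ('d \<Rightarrow> 'd \<Rightarrow> 'd) \<Rightarrow> bool" where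
  "dialgebra sc l r \<longleftrightarrow> vector_space sc \<and> bilinear_op sc l \<and> bilinear_op sc r \<and>
     (\<forall>x y z. l (l x y) z = l x (r y z)) \<and>
     (\<forall>x y z. l (l x y) z = l x (l y z)) \<and>
     (\<forall>x y z. l (r x y) z = r x (l y z)) \<and>
     (\<forall>x y z. r (l x y) z = r x (r y z)) \<and>
     (\<forall>x y z. r (r x y) z = r x (r y z))"
(* l = \<dashv>, r = \<turnstile> *)

definition dendriform ::
  "('k::field \<Rightarrow> 'e::ab_group_add \<Rightarrow> 'e) \<Rightarrow> ('e \<Rightarrow> 'e \<Rightarrow> 'e) \<Rightarrow> ('e \<Rightarrow> 'e \<Rightarrow> 'e) \<Rightarrow> bool" where
  "dendriform sc p s \<longleftrightarrow> vector_space sc \<and> bilinear_op sc p \<and> bilinear_op sc s \<and>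
     (\<forall>a b c. p (p a b) c = p a (p b c) + p a (s b c)) \<and>
     (\<forall>a b c. p (s a b) c = s a (p b c)) \<and>
     (\<forall>a b c. s (p a b) c + s (s a b) c = s a (s b c))"
(* p = \<prec>, s = \<succ> *)

(* Tensor product D \<otimes> E = F / N, where F is the free K-vector space on D \<times> E
   (finitely supported functions D \<times> E \<Rightarrow> K) and N the subspace spanned by the
   bilinearity relations. *)

definition fscale :: "'k::field \<Rightarrow> ('d \<times> 'e \<Rightarrow> 'k) \<Rightarrow> ('d \<times> 'e \<Rightarrow> 'k)" where
  "fscale c f = (\<lambda>p. c * f p)"

definition free_space :: "('d \<times> 'e \<Rightarrow> 'k::field) set" where
  "free_space = {f. finite {p. f p \<noteq> 0}}"

definition gen :: "'d \<Rightarrow> 'e \<Rightarrow> ('d \<times> 'e \<Rightarrow> 'k::field)" where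
  "gen x a = (\<lambda>p. if p = (x, a) then 1 else 0)"

definition tensor_relations ::
  "('k::field \<Rightarrow> 'd::ab_group_add \<Rightarrow> 'd) \<Rightarrow> ('k \<Rightarrow> 'e::ab_group_add \<Rightarrow> 'e) \<Rightarrow> ('d \<times> 'e \<Rightarrow> 'k) set" where
  "tensor_relations scD scE =
     {gen (x + x') a - gen x a - gen x' a | x x' a. True} \<union>
     {gen x (a + a') - gen x a - gen x a' | x a a'. True} \<union>
     {gen (scD c x) a - fscale c (gen x a) | c x a. True} \<union>
     {gen x (scE c a) - fscale c (gen x a) | c x a. True}"

definition tensor_kernel ::
  "('k::field \<Rightarrow> 'd::ab_group_add \<Rightarrow> 'd) \<Rightarrow> ('k \<Rightarrow> 'e::ab_group_add \<Rightarrow> 'e) \<Rightarrow> ('d \<times> 'e \<Rightarrow> 'k) set" where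
  "tensor_kernel scD scE = module.span fscale (tensor_relations scD scE)"

definition gen_bracket ::
  "('d \<Rightarrow> 'd \<Rightarrow> 'd) \<Rightarrow> ('d \<Rightarrow> 'd \<Rightarrow> 'd) \<Rightarrow> ('e \<Rightarrow> 'e \<Rightarrow> 'e) \<Rightarrow> ('e \<Rightarrow> 'e \<Rightarrow> 'e)
   \<Rightarrow> 'd \<Rightarrow> 'e \<Rightarrow> 'd \<Rightarrow> 'e \<Rightarrow> ('d \<times> 'e \<Rightarrow> 'k::field)" where
  "gen_bracket l r p s x a y b =
     gen (l x y) (p a b) - gen (r y x) (s b a) - gen (l y x) (p b a) + gen (r x y) (s a b)"

definition tbracket ::
  "('d \<Rightarrow> 'd \<Rightarrow> 'd) \<Rightarrow> ('d \<Rightarrow> 'd \<Rightarrow> 'd) \<Rightarrow> ('e \<Rightarrow> 'e \<Rightarrow> 'e) \<Rightarrow> ('e \<Rightarrow> 'e \<Rightarrow> 'e)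
   \<Rightarrow> ('d \<times> 'e \<Rightarrow> 'k::field) \<Rightarrow> ('d \<times> 'e \<Rightarrow> 'k) \<Rightarrow> ('d \<times> 'e \<Rightarrow> 'k)" where
  "tbracket l r p s u v =
     (\<Sum>q\<in>{q. u q \<noteq> 0}. \<Sum>q'\<in>{q'. v q' \<noteq> 0}.
        fscale (u q * v q') (gen_bracket l r p s (fst q) (snd q) (fst q') (snd q')))"

end

theory Submission
  imports Defs
begin

lemma sum_fun_apply: "(\<Sum>a\<in>A. f a) x = (\<Sum>a\<in>A. f a x)"
  by (induct A rule: infinite_finite_induct) (simp_all add: plus_fun_def zero_fun_def)

lemma fscale_module: "module (fscale :: 'k::field \<Rightarrow> ('d \<times> 'e \<Rightarrow> 'k) \<Rightarrow> _)"
  by unfold_locales (auto simp: fscale_def plus_fun_def algebra_simps)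

interpretation fs: module "fscale :: 'k::field \<Rightarrow> ('d \<times> 'e \<Rightarrow> 'k) \<Rightarrow> _"
  by (rule fscale_module)

definition bext :: "('d \<times> 'e \<Rightarrow> 'd \<times> 'e \<Rightarrow> ('d \<times> 'e \<Rightarrow> 'k::field))
   \<Rightarrow> ('d \<times> 'e \<Rightarrow> 'k) \<Rightarrow> ('d \<times> 'e \<Rightarrow> 'k) \<Rightarrow> ('d \<times> 'e \<Rightarrow> 'k)" where
  "bext B u v = (\<Sum>q\<in>{q. u q \<noteq> 0}. \<Sum>q'\<in>{q'. v q' \<noteq> 0}. fscale (u q * v q') (B q q'))"

lemma tbracket_bext:
  "tbracket l r p s = bext (\<lambda>q q'. gen_bracket l r p s (fst q) (snd q) (fst q') (snd q'))"
  by (intro ext) (simp add: tbracket_def bext_def)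

lemma free_iff: "u \<in> free_space \<longleftrightarrow> finite {q. u q \<noteq> 0}"
  by (simp add: free_space_def)

lemma bext_eq:
  assumes "finite S" "{q. u q \<noteq> 0} \<subseteq> S" "finite T" "{q. v q \<noteq> 0} \<subseteq> T"
  shows "bext B u v = (\<Sum>q\<in>S. \<Sum>q'\<in>T. fscale (u q * v q') (B q q'))"
proof -
  have fu: "finite {q. u q \<noteq> 0}" "finite {q. v q \<noteq> 0}"
    using assms finite_subset by blast+
  have "bext B u v = (\<Sum>q\<in>{q. u q \<noteq> 0}. \<Sum>q'\<in>T. fscale (u q * v q') (B q q'))"
    unfolding bext_def
    by (intro sum.cong refl sum.mono_neutral_left assms) auto
  also have "\<dots> = (\<Sum>q\<in>S. \<Sum>q'\<in>T. fscale (u q * v q') (B q q'))"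
    by (intro sum.mono_neutral_left assms) auto
  finally show ?thesis .
qed

lemma free_add: "u \<in> free_space \<Longrightarrow> v \<in> free_space \<Longrightarrow> u + v \<in> free_space"
  unfolding free_iff
  by (rule finite_subset[of _ "{q. u q \<noteq> 0} \<union> {q. v q \<noteq> 0}"]) auto

lemma free_scale: "u \<in> free_space \<Longrightarrow> fscale c u \<in> free_space"
  unfolding free_iff fscale_def
  by (rule finite_subset[of _ "{q. u q \<noteq> 0}"]) auto

lemma free_zero: "0 \<in> free_space"
  by (simp add: free_iff)

lemma free_neg: "u \<in> free_space \<Longrightarrow> - u \<in> free_space"
  unfolding free_iff by simp

lemma free_diff: "u \<in> free_space \<Longrightarrow> v \<in> free_space \<Longrightarrow> u - v \<in> free_space"
  using free_add[OF _ free_neg] by (metis diff_conv_add_uminus)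

lemma free_sum: "(\<And>a. a \<in> A \<Longrightarrow> f a \<in> free_space) \<Longrightarrow> sum f A \<in> free_space"
  by (induct A rule: infinite_finite_induct) (auto simp: free_zero free_add)

lemma free_gen: "gen x a \<in> free_space"
  unfolding free_iff gen_def by (rule finite_subset[of _ "{(x,a)}"]) auto

lemma supp_gen: "{q. gen x a q \<noteq> (0::'k::field)} = {(x,a)}"
  by (auto simp: gen_def)

lemma bext_free:
  assumes "\<And>q q'. B q q' \<in> free_space"
  shows "bext B u v \<in> free_space"
  unfolding bext_def by (intro free_sum free_scale assms)

lemma bext_add1:
  assumes "u \<in> free_space" "u' \<in> free_space" "v \<in> free_space"
  shows "bext B (u + u') v = bext B u v + bext B u' v"
proof -
  let ?S = "{q. u q \<noteq> 0} \<union> {q. u' q \<noteq> 0}" and ?T = "{q. v q \<noteq> 0}"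
  have f: "finite ?S" "finite ?T" using assms by (auto simp: free_iff)
  have s: "{q. (u + u') q \<noteq> 0} \<subseteq> ?S" by auto
  show ?thesis
    apply (subst bext_eq[OF f(1) s f(2) order_refl])
    apply (subst bext_eq[OF f(1) _ f(2) order_refl], blast)
    apply (subst bext_eq[OF f(1) _ f(2) order_refl], blast)
    apply (simp add: distrib_right fs.scale_left_distrib sum.distrib)
    done
qed

lemma bext_add2:
  assumes "u \<in> free_space" "v' \<in> free_space" "v \<in> free_space"
  shows "bext B u (v + v') = bext B u v + bext B u v'"
proof -
  let ?T = "{q. v q \<noteq> 0} \<union> {q. v' q \<noteq> 0}" and ?S = "{q. u q \<noteq> 0}"
  have f: "finite ?S" "finite ?T" using assms by (auto simp: free_iff)
  have s: "{q. (v + v') q \<noteq> 0} \<subseteq> ?T" by auto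
  show ?thesis
    apply (subst bext_eq[OF f(1) order_refl f(2) s])
    apply (subst bext_eq[OF f(1) order_refl f(2)], blast)
    apply (subst bext_eq[OF f(1) order_refl f(2)], blast)
    apply (simp add: distrib_left fs.scale_left_distrib sum.distrib)
    done
qed

lemma bext_scale1:
  assumes "u \<in> free_space" "v \<in> free_space"
  shows "bext B (fscale c u) v = fscale c (bext B u v)"
proof -
  let ?S = "{q. u q \<noteq> 0}" and ?T = "{q. v q \<noteq> 0}"
  have f: "finite ?S" "finite ?T" using assms by (auto simp: free_iff)
  have s: "{q. fscale c u q \<noteq> 0} \<subseteq> ?S" by (auto simp: fscale_def)
  show ?thesis
    apply (subst bext_eq[OF f(1) s f(2) order_refl])
    apply (subst bext_eq[OF f(1) order_refl f(2) order_refl])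
    apply (simp add: fs.scale_sum_right)
    apply (simp add: fscale_def mult.assoc)
    done
qed

lemma bext_scale2:
  assumes "u \<in> free_space" "v \<in> free_space"
  shows "bext B u (fscale c v) = fscale c (bext B u v)"
proof -
  let ?S = "{q. u q \<noteq> 0}" and ?T = "{q. v q \<noteq> 0}"
  have f: "finite ?S" "finite ?T" using assms by (auto simp: free_iff)
  have s: "{q. fscale c v q \<noteq> 0} \<subseteq> ?T" by (auto simp: fscale_def)
  show ?thesis
    apply (subst bext_eq[OF f(1) order_refl f(2) s])
    apply (subst bext_eq[OF f(1) order_refl f(2) order_refl])
    apply (simp add: fs.scale_sum_right)
    apply (simp add: fscale_def mult.commute mult.left_commute)
    done
qed

lemma bext_gen: "bext B (gen x a) (gen y b) = B (x,a) (y,b)"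
  unfolding bext_def supp_gen by (simp add: gen_def fscale_def)

lemma bext_swap: "bext (\<lambda>q q'. B q' q) u v = bext B v u"
  unfolding bext_def by (subst sum.swap) (simp add: mult.commute)

lemma bext_diffB: "bext (\<lambda>q q'. B1 q q' - B2 q q') u v = bext B1 u v - bext B2 u v"
  unfolding bext_def by (simp add: fs.scale_right_diff_distrib sum_subtractf)


lemma bext_zero1: "bext B 0 v = 0"
  unfolding bext_def by simp

lemma bext_zero2: "bext B u 0 = 0"
  unfolding bext_def by simp

lemma bext_diff1:
  assumes "u \<in> free_space" "u' \<in> free_space" "v \<in> free_space"
  shows "bext B (u - u') v = bext B u v - bext B u' v"
proof -
  have "bext B u v = bext B (u - u') v + bext B u' v"
    using bext_add1[OF free_diff[OF assms(1,2)] assms(2,3), of B] by simp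
  then show ?thesis by (simp add: algebra_simps)
qed

lemma bext_diff2:
  assumes "u \<in> free_space" "v' \<in> free_space" "v \<in> free_space"
  shows "bext B u (v - v') = bext B u v - bext B u v'"
proof -
  have "bext B u v = bext B u (v - v') + bext B u v'"
    using bext_add2[OF assms(1) assms(2) free_diff[OF assms(3,2)], of B] by simp
  then show ?thesis by (simp add: algebra_simps)
qed

lemma free_repr:
  assumes "u \<in> free_space"
  shows "u = (\<Sum>q\<in>{q. u q \<noteq> 0}. fscale (u q) (gen (fst q) (snd q)))"
proof (rule ext)
  fix x
  have fin: "finite {q. u q \<noteq> 0}" using assms by (simp add: free_iff)
  have "(\<Sum>q\<in>{q. u q \<noteq> 0}. fscale (u q) (gen (fst q) (snd q))) x
      = (\<Sum>q\<in>{q. u q \<noteq> 0}. if q = x then u q else 0)"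
    unfolding sum_fun_apply by (intro sum.cong refl) (auto simp: fscale_def gen_def)
  also have "\<dots> = u x" using fin by (simp add: sum.delta')
  finally show "u x = (\<Sum>q\<in>{q. u q \<noteq> 0}. fscale (u q) (gen (fst q) (snd q))) x" by simp
qed

lemma free_induct [consumes 1, case_names zero add scale gen]:
  assumes u: "u \<in> free_space"
    and z: "Q 0"
    and a: "\<And>u u'. u \<in> free_space \<Longrightarrow> u' \<in> free_space \<Longrightarrow> Q u \<Longrightarrow> Q u' \<Longrightarrow> Q (u + u')"
    and sc: "\<And>c u. u \<in> free_space \<Longrightarrow> Q u \<Longrightarrow> Q (fscale c u)"
    and g: "\<And>x a. Q (gen x a)"
  shows "Q u"
proof -
  have "finite A \<Longrightarrow> Q (\<Sum>q\<in>A. fscale (c q) (gen (fst q) (snd q))) \<and>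
          (\<Sum>q\<in>A. fscale (c q) (gen (fst q) (snd q))) \<in> free_space" for A c
  proof (induct A rule: finite_induct)
    case empty show ?case by (simp only: sum.empty) (rule conjI[OF z free_zero])
  next
    case (insert q F)
    show ?case
      unfolding sum.insert[OF insert(1,2)]
      using insert(3) by (blast intro: a sc g free_scale free_gen free_add)
  qed
  then show ?thesis
    using free_repr[OF u] u by (metis free_iff)
qed

locale dd =
  fixes scD :: "'k::field \<Rightarrow> 'd::ab_group_add \<Rightarrow> 'd"
    and scE :: "'k \<Rightarrow> 'e::ab_group_add \<Rightarrow> 'e"
    and l r :: "'d \<Rightarrow> 'd \<Rightarrow> 'd"
    and p s :: "'e \<Rightarrow> 'e \<Rightarrow> 'e"
  assumes dia: "dialgebra scD l r"
    and den: "dendriform scE p s"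
begin

abbreviation NN :: "('d \<times> 'e \<Rightarrow> 'k) set" where "NN \<equiv> tensor_kernel scD scE"

lemma lbil: "l (x + y) z = l x z + l y z" "l x (y + z) = l x y + l x z"
    "l (scD c x) y = scD c (l x y)" "l x (scD c y) = scD c (l x y)"
  using dia unfolding dialgebra_def bilinear_op_def by auto
lemma rbil: "r (x + y) z = r x z + r y z" "r x (y + z) = r x y + r x z"
    "r (scD c x) y = scD c (r x y)" "r x (scD c y) = scD c (r x y)"
  using dia unfolding dialgebra_def bilinear_op_def by auto
lemma pbil: "p (a + b) e = p a e + p b e" "p a (b + e) = p a b + p a e"
    "p (scE c a) b = scE c (p a b)" "p a (scE c b) = scE c (p a b)"
  using den unfolding dendriform_def bilinear_op_def by auto
lemma sbil: "s (a + b) e = s a e + s b e" "s a (b + e) = s a b + s a e"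
    "s (scE c a) b = scE c (s a b)" "s a (scE c b) = scE c (s a b)"
  using den unfolding dendriform_def bilinear_op_def by auto

lemma dax: "l (l x y) z = l x (r y z)" "l (l x y) z = l x (l y z)"
   "l (r x y) z = r x (l y z)" "r (l x y) z = r x (r y z)" "r (r x y) z = r x (r y z)"
  using dia unfolding dialgebra_def by blast+

lemma eax: "p (p a b) e = p a (p b e) + p a (s b e)" "p (s a b) e = s a (p b e)"
   "s (p a b) e + s (s a b) e = s a (s b e)"
  using den unfolding dendriform_def by blast+

lemma N_add: "u \<in> NN \<Longrightarrow> v \<in> NN \<Longrightarrow> u + v \<in> NN"
  unfolding tensor_kernel_def by (rule fs.span_add)
lemma N_diff: "u \<in> NN \<Longrightarrow> v \<in> NN \<Longrightarrow> u - v \<in> NN"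
  unfolding tensor_kernel_def by (rule fs.span_diff)
lemma N_scale: "u \<in> NN \<Longrightarrow> fscale c u \<in> NN"
  unfolding tensor_kernel_def by (rule fs.span_scale)
lemma N_zero: "0 \<in> NN"
  unfolding tensor_kernel_def by (rule fs.span_zero)
lemma N_rel: "u \<in> tensor_relations scD scE \<Longrightarrow> u \<in> NN"
  unfolding tensor_kernel_def by (rule fs.span_base)

lemma rel_free: "u \<in> tensor_relations scD scE \<Longrightarrow> u \<in> free_space"
  unfolding tensor_relations_def by (auto intro!: free_diff free_gen free_scale)

lemma R1: "gen (x + x') a - gen x a - gen x' a \<in> NN"
  by (rule N_rel, unfold tensor_relations_def, blast)
lemma R2: "gen x (a + a') - gen x a - gen x a' \<in> NN"
  by (rule N_rel, unfold tensor_relations_def, blast)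
lemma R3: "gen (scD c x) a - fscale c (gen x a) \<in> NN"
  by (rule N_rel, unfold tensor_relations_def, blast)
lemma R4: "gen x (scE c a) - fscale c (gen x a) \<in> NN"
  by (rule N_rel, unfold tensor_relations_def, blast)

definition GP :: "'d \<times> 'e \<Rightarrow> 'd \<times> 'e \<Rightarrow> ('d \<times> 'e \<Rightarrow> 'k)" where
  "GP q q' = gen (l (fst q) (fst q')) (p (snd q) (snd q')) + gen (r (fst q) (fst q')) (s (snd q) (snd q'))"

abbreviation pr where "pr \<equiv> bext GP"

lemma GP_free: "GP q q' \<in> free_space"
  unfolding GP_def by (intro free_add free_gen)

lemma pr_free: "pr u v \<in> free_space"
  by (intro bext_free GP_free)

lemma pr_gen: "pr (gen x a) (gen y b) = gen (l x y) (p a b) + gen (r x y) (s a b)"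
  unfolding bext_gen GP_def by simp


lemmas bx = bext_add1 bext_add2 bext_diff1 bext_diff2 bext_scale1 bext_scale2
lemmas fr = free_gen free_add free_diff free_scale pr_free free_zero

lemma pr_rel_gen:
  assumes "u \<in> tensor_relations scD scE"
  shows "pr u (gen y b) \<in> NN \<and> pr (gen y b) u \<in> NN"
  using assms unfolding tensor_relations_def
proof (elim UnE CollectE exE conjE)
  fix x x' a assume u: "u = gen (x + x') a - gen x a - gen x' a"
  have "pr u (gen y b) = (gen (l x y + l x' y) (p a b) - gen (l x y) (p a b) - gen (l x' y) (p a b))
      + (gen (r x y + r x' y) (s a b) - gen (r x y) (s a b) - gen (r x' y) (s a b))"
    unfolding u by (simp add: bx fr pr_gen lbil rbil algebra_simps)
  moreover have "pr (gen y b) u = (gen (l y x + l y x') (p b a) - gen (l y x) (p b a) - gen (l y x') (p b a))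
      + (gen (r y x + r y x') (s b a) - gen (r y x) (s b a) - gen (r y x') (s b a))"
    unfolding u by (simp add: bx fr pr_gen lbil rbil algebra_simps)
  ultimately show ?thesis by (simp add: N_add R1)
next
  fix x a a' assume u: "u = gen x (a + a') - gen x a - gen x a'"
  have "pr u (gen y b) = (gen (l x y) (p a b + p a' b) - gen (l x y) (p a b) - gen (l x y) (p a' b))
      + (gen (r x y) (s a b + s a' b) - gen (r x y) (s a b) - gen (r x y) (s a' b))"
    unfolding u by (simp add: bx fr pr_gen pbil sbil algebra_simps)
  moreover have "pr (gen y b) u = (gen (l y x) (p b a + p b a') - gen (l y x) (p b a) - gen (l y x) (p b a'))
      + (gen (r y x) (s b a + s b a') - gen (r y x) (s b a) - gen (r y x) (s b a'))"
    unfolding u by (simp add: bx fr pr_gen pbil sbil algebra_simps)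
  ultimately show ?thesis by (simp add: N_add R2)
next
  fix c x a assume u: "u = gen (scD c x) a - fscale c (gen x a)"
  have "pr u (gen y b) = (gen (scD c (l x y)) (p a b) - fscale c (gen (l x y) (p a b)))
      + (gen (scD c (r x y)) (s a b) - fscale c (gen (r x y) (s a b)))"
    unfolding u by (simp add: bx fr pr_gen lbil rbil fs.scale_right_distrib algebra_simps)
  moreover have "pr (gen y b) u = (gen (scD c (l y x)) (p b a) - fscale c (gen (l y x) (p b a)))
      + (gen (scD c (r y x)) (s b a) - fscale c (gen (r y x) (s b a)))"
    unfolding u by (simp add: bx fr pr_gen lbil rbil fs.scale_right_distrib algebra_simps)
  ultimately show ?thesis by (simp add: N_add R3)
next
  fix c x a assume u: "u = gen x (scE c a) - fscale c (gen x a)"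
  have "pr u (gen y b) = (gen (l x y) (scE c (p a b)) - fscale c (gen (l x y) (p a b)))
      + (gen (r x y) (scE c (s a b)) - fscale c (gen (r x y) (s a b)))"
    unfolding u by (simp add: bx fr pr_gen pbil sbil fs.scale_right_distrib algebra_simps)
  moreover have "pr (gen y b) u = (gen (l y x) (scE c (p b a)) - fscale c (gen (l y x) (p b a)))
      + (gen (r y x) (scE c (s b a)) - fscale c (gen (r y x) (s b a)))"
    unfolding u by (simp add: bx fr pr_gen pbil sbil fs.scale_right_distrib algebra_simps)
  ultimately show ?thesis by (simp add: N_add R4)
qed

lemma pr_rel:
  assumes "u \<in> tensor_relations scD scE" "v \<in> free_space"
  shows "pr u v \<in> NN \<and> pr v u \<in> NN"
  using assms(2)
proof (induct v rule: free_induct)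
  case zero show ?case by (simp only: bext_zero1 bext_zero2) (rule conjI N_zero)+
next
  case (add v v')
  then show ?case using rel_free[OF assms(1)]
    by (simp only: bext_add1 bext_add2) (intro conjI N_add; blast)
next
  case (scale c v)
  then show ?case using rel_free[OF assms(1)]
    by (simp only: bext_scale1 bext_scale2) (intro conjI N_scale; blast)
next
  case (gen y b)
  then show ?case using pr_rel_gen[OF assms(1)] by simp
qed

lemma pr_N:
  assumes "u \<in> NN"
  shows "u \<in> free_space \<and> (\<forall>v\<in>free_space. pr u v \<in> NN \<and> pr v u \<in> NN)"
  using assms unfolding tensor_kernel_def
proof (induct u rule: fs.span_induct_alt)
  case base
  show ?case by (intro conjI ballI free_zero; simp only: bext_zero1 bext_zero2 N_zero[unfolded tensor_kernel_def])
next
  case (step c x y)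
  have xf: "x \<in> free_space" using rel_free step(1) by blast
  show ?case
  proof (rule conjI)
    show "fscale c x + y \<in> free_space" using step xf by (simp add: fr)
  next
    show "\<forall>v\<in>free_space. pr (fscale c x + y) v \<in> fs.span (tensor_relations scD scE) \<and>
        pr v (fscale c x + y) \<in> fs.span (tensor_relations scD scE)"
    proof (rule ballI)
    fix v :: "'d \<times> 'e \<Rightarrow> 'k" assume v: "v \<in> free_space"
    have "pr x v \<in> NN" "pr v x \<in> NN" using pr_rel[OF step(1) v] by auto
    then show "pr (fscale c x + y) v \<in> fs.span (tensor_relations scD scE) \<and>
        pr v (fscale c x + y) \<in> fs.span (tensor_relations scD scE)"
      using step(2) v xf
      by (simp only: bext_add1 bext_add2 bext_scale1 bext_scale2 fr tensor_kernel_def)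
        (intro conjI fs.span_add fs.span_scale; simp add: tensor_kernel_def)
  qed
  qed
qed


definition asc where "asc u v w = pr (pr u v) w - pr u (pr v w)"

lemma asc_gen: "asc (gen x a) (gen y b) (gen z c) \<in> NN"
proof -
  have d1: "l x (r y z) = l x (l y z)" using dax(1,2) by metis
  have e3: "s a (s b c) = s (p a b) c + s (s a b) c" using eax(3) by simp
  have "asc (gen x a) (gen y b) (gen z c) =
     (gen (l x (l y z)) (p a (p b c) + p a (s b c)) - gen (l x (l y z)) (p a (p b c)) - gen (l x (l y z)) (p a (s b c)))
   - (gen (r x (r y z)) (s (p a b) c + s (s a b) c) - gen (r x (r y z)) (s (p a b) c) - gen (r x (r y z)) (s (s a b) c))"
    unfolding asc_def pr_gen
    by (simp add: bx fr pr_gen d1 e3 dax(2-5) eax(1,2) algebra_simps)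
  then show ?thesis by (simp only:) (intro N_diff R2)
qed

lemma asc_add1: "u \<in> free_space \<Longrightarrow> u' \<in> free_space \<Longrightarrow> v \<in> free_space \<Longrightarrow> w \<in> free_space \<Longrightarrow>
   asc (u + u') v w = asc u v w + asc u' v w"
  unfolding asc_def by (simp only: bx fr) (simp add: algebra_simps)
lemma asc_add2: "u \<in> free_space \<Longrightarrow> v' \<in> free_space \<Longrightarrow> v \<in> free_space \<Longrightarrow> w \<in> free_space \<Longrightarrow>
   asc u (v + v') w = asc u v w + asc u v' w"
  unfolding asc_def by (simp only: bx fr) (simp add: algebra_simps)
lemma asc_add3: "u \<in> free_space \<Longrightarrow> w' \<in> free_space \<Longrightarrow> v \<in> free_space \<Longrightarrow> w \<in> free_space \<Longrightarrow>
   asc u v (w + w') = asc u v w + asc u v w'"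
  unfolding asc_def by (simp only: bx fr) (simp add: algebra_simps)
lemma asc_scale1: "u \<in> free_space \<Longrightarrow> v \<in> free_space \<Longrightarrow> w \<in> free_space \<Longrightarrow>
   asc (fscale c u) v w = fscale c (asc u v w)"
  unfolding asc_def by (simp only: bx fr fs.scale_right_diff_distrib)
lemma asc_scale2: "u \<in> free_space \<Longrightarrow> v \<in> free_space \<Longrightarrow> w \<in> free_space \<Longrightarrow>
   asc u (fscale c v) w = fscale c (asc u v w)"
  unfolding asc_def by (simp only: bx fr fs.scale_right_diff_distrib)
lemma asc_scale3: "u \<in> free_space \<Longrightarrow> v \<in> free_space \<Longrightarrow> w \<in> free_space \<Longrightarrow>
   asc u v (fscale c w) = fscale c (asc u v w)"
  unfolding asc_def by (simp only: bx fr fs.scale_right_diff_distrib)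
lemma asc_zero: "asc 0 v w = 0" "asc u 0 w = 0" "asc u v 0 = 0"
  unfolding asc_def by (simp_all only: bext_zero1 bext_zero2 diff_self)

lemma asc_N:
  assumes "u \<in> free_space" "v \<in> free_space" "w \<in> free_space"
  shows "asc u v w \<in> NN"
proof -
  have A: "asc (gen x a) (gen y b) w \<in> NN" if "w \<in> free_space" for x a y b w
    using that
  proof (induct w rule: free_induct)
    case zero show ?case by (simp only: asc_zero N_zero)
  next
    case (add w w') then show ?case by (simp only: asc_add3 fr) (rule N_add)
  next
    case (scale c w) then show ?case by (simp only: asc_scale3 fr) (rule N_scale)
  next
    case (gen z c) then show ?case by (rule asc_gen)
  qed
  have B: "asc (gen x a) v w \<in> NN" if "v \<in> free_space" "w \<in> free_space" for x a v w
    using that(1)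
  proof (induct v rule: free_induct)
    case zero show ?case by (simp only: asc_zero N_zero)
  next
    case (add v v') then show ?case using that(2) by (simp only: asc_add2 fr) (rule N_add)
  next
    case (scale c v) then show ?case using that(2) by (simp only: asc_scale2 fr) (rule N_scale)
  next
    case (gen y b) then show ?case by (rule A[OF that(2)])
  qed
  show ?thesis using assms(1)
  proof (induct u rule: free_induct)
    case zero show ?case by (simp only: asc_zero N_zero)
  next
    case (add u u') then show ?case using assms(2,3) by (simp only: asc_add1 fr) (rule N_add)
  next
    case (scale c u) then show ?case using assms(2,3) by (simp only: asc_scale1 fr) (rule N_scale)
  next
    case (gen x a) then show ?case by (rule B[OF assms(2,3)])
  qed
qed

end

theorem proposition5p3:
  fixes scD :: "'k::field \<Rightarrow> 'd::ab_group_add \<Rightarrow> 'd"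
    and scE :: "'k \<Rightarrow> 'e::ab_group_add \<Rightarrow> 'e"
    and l r :: "'d \<Rightarrow> 'd \<Rightarrow> 'd"
    and p s :: "'e \<Rightarrow> 'e \<Rightarrow> 'e"
  assumes "dialgebra scD l r"
    and "dendriform scE p s"
  defines "N \<equiv> tensor_kernel scD scE"
    and "br \<equiv> (tbracket l r p s :: ('d \<times> 'e \<Rightarrow> 'k) \<Rightarrow> _ \<Rightarrow> _)"
  shows
    \<comment> \<open>the bracket maps F \<times> F into F and descends to the quotient F/N = D \<otimes> E\<close>
    "(\<forall>u\<in>free_space. \<forall>v\<in>free_space. br u v \<in> free_space) \<and>
     (\<forall>u\<in>free_space. \<forall>v\<in>free_space. u \<in> N \<longrightarrow> br u v \<in> N \<and> br v u \<in> N) \<and>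
     \<comment> \<open>bilinearity\<close>
     (\<forall>u\<in>free_space. \<forall>u'\<in>free_space. \<forall>v\<in>free_space.
        br (u + u') v = br u v + br u' v \<and> br v (u + u') = br v u + br v u') \<and>
     (\<forall>c. \<forall>u\<in>free_space. \<forall>v\<in>free_space.
        br (fscale c u) v = fscale c (br u v) \<and> br v (fscale c u) = fscale c (br v u)) \<and>
     \<comment> \<open>alternating\<close>
     (\<forall>u\<in>free_space. br u u \<in> N) \<and>
     \<comment> \<open>Jacobi identity\<close>
     (\<forall>u\<in>free_space. \<forall>v\<in>free_space. \<forall>w\<in>free_space.
        br u (br v w) + br v (br w u) + br w (br u v) \<in> N)"
proof -
  interpret dd scD scE l r p s using assms(1,2) by unfold_locales
  have gbe: "(\<lambda>q q'. gen_bracket l r p s (fst q) (snd q) (fst q') (snd q')) = (\<lambda>q q'. GP q q' - GP q' q)"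
    by (intro ext) (simp add: gen_bracket_def GP_def)
  have brb: "br = bext (\<lambda>q q'. gen_bracket l r p s (fst q) (snd q) (fst q') (snd q'))"
    unfolding br_def tbracket_bext ..
  have brpr: "br u v = pr u v - pr v u" for u v
  proof -
    have "br u v = bext GP u v - bext (\<lambda>q q'. GP q' q) u v"
      unfolding brb gbe by (rule bext_diffB)
    also have "\<dots> = pr u v - pr v u" by (simp only: bext_swap[of GP])
    finally show ?thesis .
  qed
  have bf: "br u v \<in> free_space" for u v
    unfolding brpr by (intro free_diff pr_free)
  have NN: "N = NN" unfolding N_def ..
  show ?thesis
  proof (intro conjI ballI allI impI)
    fix u v :: "'d \<times> 'e \<Rightarrow> 'k" assume "u \<in> free_space" "v \<in> free_space"
    show "br u v \<in> free_space" by (rule bf)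
  next
    fix u v :: "'d \<times> 'e \<Rightarrow> 'k" assume "u \<in> free_space" "v \<in> free_space" "u \<in> N"
    then show "br u v \<in> N" "br v u \<in> N"
      using pr_N[of u] unfolding NN brpr by (auto intro: N_diff)
  next
    fix u u' v :: "'d \<times> 'e \<Rightarrow> 'k" assume "u \<in> free_space" "u' \<in> free_space" "v \<in> free_space"
    then show "br (u + u') v = br u v + br u' v" "br v (u + u') = br v u + br v u'"
      unfolding brb by (simp_all only: bext_add1 bext_add2)
  next
    fix c and u v :: "'d \<times> 'e \<Rightarrow> 'k" assume "u \<in> free_space" "v \<in> free_space"
    then show "br (fscale c u) v = fscale c (br u v)" "br v (fscale c u) = fscale c (br v u)"
      unfolding brb by (simp_all only: bext_scale1 bext_scale2)
  next
    fix u :: "'d \<times> 'e \<Rightarrow> 'k"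
    show "br u u \<in> N" unfolding brpr NN by (simp only: diff_self N_zero)
  next
    fix u v w :: "'d \<times> 'e \<Rightarrow> 'k" assume f: "u \<in> free_space" "v \<in> free_space" "w \<in> free_space"
    have "br u (br v w) + br v (br w u) + br w (br u v) =
       (asc u w v - asc u v w) + (asc w v u - asc v w u) + (asc v u w - asc w u v)"
      using f unfolding brpr asc_def
      by (simp only: bx pr_free fr) (simp add: algebra_simps)
    then show "br u (br v w) + br v (br w u) + br w (br u v) \<in> N"
      unfolding NN using f by (simp only:) (intro N_add N_diff asc_N; assumption)
  qed
qed

end
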